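(* Consider the multi-subflow routing problem described in the context. Assume $e_{ij}^k(\mathbf{y})>0$ for all $(i,j)\in\mathcal{A}$, all $k$ and all $\mathbf{y}\in\{0,1\}^N$, that at least one directed path from $1$ to $n$ exists, and that every subflow must recharge: for every routing $x$ in which each $x^k$ is the indicator of a simple directed $1$–$n$ path $P^k$, and every $k$, $\sum_{(i,j)\in P^k} e_{ij}^k(\mathbf{x}_{ij})>E_1^k$. Consider the routing-only problem $$\text{(R)}\quad\min_{x}\ \sum_{(i,j)\in\mathcal{A}}\sum_{k=1}^N\Bigl(\tau_{ij}^k(\mathbf{x}_{ij})+g\,e_{ij}^k(\mathbf{x}_{ij})\,x_{ij}^k\Bigr)$$ over all $x=(x_{ij}^k)$ such that, for each $k$, the arcs with $x_{ij}^k=1$ form a simple directed path from $1$ to $n$. Then the multi-subflow routing problem has an optimal solution, its optimal value equals $(\text{optimal value of (R)})-g\sum_{k=1}^N E_1^k$, and for every optimal solution $(x^*,r^*,E^* )$ of the multi-subflow routing problem, $x^*$ is an optimal solution of (R).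
   Context: Let $G=(\mathcal{N},\mathcal{A})$ be a directed graph with $\mathcal{N}=\{1,\dots,n\}$, $n\ge2$, $I(i)=\{j:(j,i)\in\mathcal{A}\}$, $O(i)=\{j:(i,j)\in\mathcal{A}\}$, with $I(1)=\emptyset$ and $O(n)=\emptyset$ (origin $1$, destination $n$). There are $N\ge1$ vehicle subflows $k=1,\dots,N$. Decision variables: $x_{ij}^k\in\{0,1\}$ for $(i,j)\in\mathcal{A}$ and each $k$, recharging amounts $r_i^k\ge0$ for $i\in\mathcal{N}$ and each $k$, and residual energies $E_j^k$, $j=2,\dots,n$. Write $\mathbf{x}_{ij}=(x_{ij}^1,\dots,x_{ij}^N)\in\{0,1\}^N$. For each arc and each $k$ there are given real-valued functions $\tau_{ij}^k(\mathbf{x}_{ij})$ (travel time of subflow $k$ on arc $(i,j)$, depending on congestion) and $e_{ij}^k(\mathbf{x}_{ij})$ (energy consumption of subflow $k$ on arc $(i,j)$). Given constants: initial energies $E_1^k\ge0$ and $g>0$ (charging time per unit energy). A triple $(x,r,E)$ is feasible if for every $k$: (a) the arcs with $x_{ij}^k=1$ form a simple directed path from $1$ to $n$; (b) $E_j^k=\sum_{i\in I(j)}\bigl(E_i^k+r_i^k-e_{ij}^k(\mathbf{x}_{ij})\bigr)x_{ij}^k$ for $j=2,\dots,n$; (c) $E_i^k\ge0$ for all $i$. The objective to be minimized is $J(x,r)=\sum_{(i,j)\in\mathcal{A}}\sum_{k=1}^N\bigl(\tau_{ij}^k(\mathbf{x}_{ij})+g\,r_i^k x_{ij}^k\bigr)$.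 An optimal solution is a feasible solution minimizing $J$. *)

theory Defs
  imports Complex_Main
begin

(* A routing is x :: nat => nat*nat => bool,
   x k (i,j) = True  iff  x_ij^k = 1.  The congestion vector
   x_ij = (x_ij^1,...,x_ij^N) is represented as a bool list of length N. *)

definition arcvec :: "nat \<Rightarrow> (nat \<Rightarrow> nat \<times> nat \<Rightarrow> bool) \<Rightarrow> nat \<times> nat \<Rightarrow> bool list" where
  "arcvec N x a = map (\<lambda>k. x k a) [1..<N+1]"

definition is_dpath :: "nat \<Rightarrow> (nat \<times> nat) set \<Rightarrow> nat list \<Rightarrow> bool" where
  "is_dpath n A p \<longleftrightarrow> p \<noteq> [] \<and> hd p = 1 \<and> last p = n \<and>
     (\<forall>i. Suc i < length p \<longrightarrow> (p ! i, p ! Suc i) \<in> A)"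

definition is_simple_path :: "nat \<Rightarrow> (nat \<times> nat) set \<Rightarrow> nat list \<Rightarrow> bool" where
  "is_simple_path n A p \<longleftrightarrow> is_dpath n A p \<and> distinct p"

definition path_arcs :: "nat list \<Rightarrow> (nat \<times> nat) set" where
  "path_arcs p = set (zip p (tl p))"

definition routing_ok :: "nat \<Rightarrow> (nat \<times> nat) set \<Rightarrow> nat \<Rightarrow> (nat \<Rightarrow> nat \<times> nat \<Rightarrow> bool) \<Rightarrow> bool" where
  "routing_ok n A N x \<longleftrightarrow>
     (\<forall>k\<in>{1..N}. \<exists>p. is_simple_path n A p \<and> {a \<in> A. x k a} = path_arcs p)"

definition msr_feasible ::
  "nat \<Rightarrow> (nat \<times> nat) set \<Rightarrow> nat \<Rightarrow> (nat \<Rightarrow> nat \<times> nat \<Rightarrow> bool list \<Rightarrow> real) \<Rightarrow> (nat \<Rightarrow> real) \<Rightarrow>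
   (nat \<Rightarrow> nat \<times> nat \<Rightarrow> bool) \<Rightarrow> (nat \<Rightarrow> nat \<Rightarrow> real) \<Rightarrow> (nat \<Rightarrow> nat \<Rightarrow> real) \<Rightarrow> bool" where
  "msr_feasible n A N e E1 x r E \<longleftrightarrow>
     routing_ok n A N x \<and>
     (\<forall>k\<in>{1..N}. \<forall>i\<in>{1..n}. r k i \<ge> 0) \<and>
     (\<forall>k\<in>{1..N}. E k 1 = E1 k) \<and>
     (\<forall>k\<in>{1..N}. \<forall>j\<in>{2..n}.
        E k j = (\<Sum>i\<in>{i. (i, j) \<in> A}.
                   (E k i + r k i - e k (i, j) (arcvec N x (i, j))) * of_bool (x k (i, j)))) \<and>
     (\<forall>k\<in>{1..N}. \<forall>i\<in>{1..n}. E k i \<ge> 0)"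

definition msr_obj ::
  "(nat \<times> nat) set \<Rightarrow> nat \<Rightarrow> (nat \<Rightarrow> nat \<times> nat \<Rightarrow> bool list \<Rightarrow> real) \<Rightarrow> real \<Rightarrow>
   (nat \<Rightarrow> nat \<times> nat \<Rightarrow> bool) \<Rightarrow> (nat \<Rightarrow> nat \<Rightarrow> real) \<Rightarrow> real" where
  "msr_obj A N tau g x r =
     (\<Sum>a\<in>A. \<Sum>k=1..N. tau k a (arcvec N x a) + g * r k (fst a) * of_bool (x k a))"

definition msr_optimal ::
  "nat \<Rightarrow> (nat \<times> nat) set \<Rightarrow> nat \<Rightarrow> (nat \<Rightarrow> nat \<times> nat \<Rightarrow> bool list \<Rightarrow> real) \<Rightarrow>
   (nat \<Rightarrow> nat \<times> nat \<Rightarrow> bool list \<Rightarrow> real) \<Rightarrow> (nat \<Rightarrow> real) \<Rightarrow> real \<Rightarrow>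
   (nat \<Rightarrow> nat \<times> nat \<Rightarrow> bool) \<Rightarrow> (nat \<Rightarrow> nat \<Rightarrow> real) \<Rightarrow> (nat \<Rightarrow> nat \<Rightarrow> real) \<Rightarrow> bool" where
  "msr_optimal n A N tau e E1 g x r E \<longleftrightarrow>
     msr_feasible n A N e E1 x r E \<and>
     (\<forall>x' r' E'. msr_feasible n A N e E1 x' r' E' \<longrightarrow> msr_obj A N tau g x r \<le> msr_obj A N tau g x' r')"

definition R_obj ::
  "(nat \<times> nat) set \<Rightarrow> nat \<Rightarrow> (nat \<Rightarrow> nat \<times> nat \<Rightarrow> bool list \<Rightarrow> real) \<Rightarrow>
   (nat \<Rightarrow> nat \<times> nat \<Rightarrow> bool list \<Rightarrow> real) \<Rightarrow> real \<Rightarrow> (nat \<Rightarrow> nat \<times> nat \<Rightarrow> bool) \<Rightarrow> real" where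
  "R_obj A N tau e g x =
     (\<Sum>a\<in>A. \<Sum>k=1..N. tau k a (arcvec N x a) + g * e k a (arcvec N x a) * of_bool (x k a))"

definition R_optimal ::
  "nat \<Rightarrow> (nat \<times> nat) set \<Rightarrow> nat \<Rightarrow> (nat \<Rightarrow> nat \<times> nat \<Rightarrow> bool list \<Rightarrow> real) \<Rightarrow>
   (nat \<Rightarrow> nat \<times> nat \<Rightarrow> bool list \<Rightarrow> real) \<Rightarrow> real \<Rightarrow> (nat \<Rightarrow> nat \<times> nat \<Rightarrow> bool) \<Rightarrow> bool" where
  "R_optimal n A N tau e g x \<longleftrightarrow>
     routing_ok n A N x \<and>
     (\<forall>x'. routing_ok n A N x' \<longrightarrow> R_obj A N tau e g x \<le> R_obj A N tau e g x')"

definition msr_optval where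
  "msr_optval n A N tau e E1 g =
     Inf {msr_obj A N tau g x r | x r E. msr_feasible n A N e E1 x r E}"

definition R_optval where
  "R_optval n A N tau e g = Inf {R_obj A N tau e g x | x. routing_ok n A N x}"

end

theory Submission
  imports Defs
begin

lemma dpath_succ: "is_dpath n A p \<longleftrightarrow> p \<noteq> [] \<and> hd p = 1 \<and> last p = n \<and> successively (\<lambda>a b. (a,b) \<in> A) p"
  unfolding is_dpath_def successively_conv_nth by simp

lemma dpath_simple: "is_dpath n A p \<Longrightarrow> \<exists>q. is_simple_path n A q"
proof (induction "length p" arbitrary: p rule: less_induct)
  case less
  show ?case
  proof (cases "distinct p")
    case True then show ?thesis using less.prems unfolding is_simple_path_def by blast
  next
    case False
    then obtain xs ys zs y where p: "p = xs@[y]@ys@[y]@zs" using not_distinct_decomp by blast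
    let ?q = "xs@[y]@zs"
    let ?P = "\<lambda>a b. (a,b) \<in> A"
    have s: "successively ?P p" "p \<noteq> []" "hd p = 1" "last p = n" using less.prems unfolding dpath_succ by auto
    have s1: "successively ?P (xs@[y])"
      using s(1) successively_append_iff[of ?P "xs@[y]" "ys@[y]@zs"] unfolding p by simp
    have s2: "successively ?P (y#zs)"
      using s(1) successively_append_iff[of ?P "xs@[y]@ys" "[y]@zs"] unfolding p by simp
    have s3: "successively ?P ?q"
      using s1 s2 successively_append_iff[of ?P "xs@[y]" zs] by (cases zs) (auto simp: successively_Cons)
    have "hd ?q = 1" using s(3) unfolding p by (cases xs) auto
    moreover have "last ?q = n" using s(4) unfolding p by (cases zs) auto
    ultimately have "is_dpath n A ?q"
      using s3 unfolding dpath_succ by simp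
    moreover have "length ?q < length p" using p by simp
    ultimately show ?thesis using less.hyps by blast
  qed
qed

lemma path_arcs_iff: "a \<in> path_arcs p \<longleftrightarrow> (\<exists>s. Suc s < length p \<and> a = (p!s, p!Suc s))"
proof
  assume "a \<in> path_arcs p"
  then obtain i where "i < length p - 1" "a = (p!i, tl p ! i)" unfolding path_arcs_def set_zip by auto
  then have "Suc i < length p \<and> a = (p!i, p!Suc i)" by (auto simp: nth_tl)
  then show "\<exists>s. Suc s < length p \<and> a = (p!s, p!Suc s)" by blast
next
  assume "\<exists>s. Suc s < length p \<and> a = (p!s, p!Suc s)"
  then obtain s where "Suc s < length p" "a = (p!s, p!Suc s)" by blast
  then show "a \<in> path_arcs p" unfolding path_arcs_def set_zip by (auto simp: nth_tl intro!: exI[of _ s])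
qed

lemma path_arcs_img: "path_arcs p = (\<lambda>s. (p!s, p!Suc s)) ` {..<length p - 1}"
proof -
  have "\<And>a. (\<exists>s. Suc s < length p \<and> a = (p!s, p!Suc s)) \<longleftrightarrow> a \<in> (\<lambda>s. (p!s, p!Suc s)) ` {..<length p - 1}"
    by (auto simp: image_iff less_diff_conv)
  then show ?thesis using path_arcs_iff by blast
qed

lemma sum_path_arcs:
  assumes "distinct p"
  shows "(\<Sum>a\<in>path_arcs p. f a) = (\<Sum>s<length p - 1. f (p!s, p!Suc s))"
proof -
  have "inj_on (\<lambda>s. (p!s, p!Suc s)) {..<length p - 1}"
  proof (rule inj_onI)
    fix a b assume a: "a \<in> {..<length p - 1}" and b: "b \<in> {..<length p - 1}"
      and eq: "(p!a, p!Suc a) = (p!b, p!Suc b)"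
    then have "p!a = p!b" by simp
    moreover have "a < length p" "b < length p" using a b by auto
    ultimately show "a = b" using nth_eq_iff_index_eq[OF assms] by blast
  qed
  then show ?thesis unfolding path_arcs_img by (simp add: sum.reindex)
qed

lemma sum_single:
  assumes "finite S" "i0 \<in> S" "\<And>i. i \<in> S \<Longrightarrow> i \<noteq> i0 \<Longrightarrow> f i = 0"
  shows "sum f S = (f i0 :: real)"
proof -
  have "sum f S = f i0 + sum f (S - {i0})" by (rule sum.remove[OF assms(1,2)])
  also have "sum f (S - {i0}) = 0" using assms by (intro sum.neutral) auto
  finally show ?thesis by simp
qed

lemma split_gen:
  assumes "finite A"
  shows "(\<Sum>a\<in>A. \<Sum>k=1..N. t k a + g * f k a * of_bool (x k a)) =
    (\<Sum>a\<in>A. \<Sum>k=1..N. t k a) + g * (\<Sum>k=1..N. \<Sum>a\<in>{a\<in>A. x k a}. (f k a :: real))"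
proof -
  have "(\<Sum>a\<in>A. \<Sum>k=1..N. g * f k a * of_bool (x k a)) = (\<Sum>k=1..N. \<Sum>a\<in>A. g * (if x k a then f k a else 0))"
    by (subst sum.swap) (intro sum.cong refl; simp)
  also have "\<dots> = g * (\<Sum>k=1..N. \<Sum>a\<in>{a\<in>A. x k a}. f k a)"
    by (simp add: sum_distrib_left sum.inter_filter[OF assms])
  finally show ?thesis by (simp add: sum.distrib)
qed

definition idx :: "'a list \<Rightarrow> 'a \<Rightarrow> nat" where
  "idx p j = (THE t. t < length p \<and> p!t = j)"

lemma idx_nth: "distinct p \<Longrightarrow> t < length p \<Longrightarrow> idx p (p!t) = t"
  unfolding idx_def by (rule the_equality) (auto simp: nth_eq_iff_index_eq)

lemma idx_in: "j \<in> set p \<Longrightarrow> distinct p \<Longrightarrow> idx p j < length p \<and> p!(idx p j) = j"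
proof -
  assume "j \<in> set p" "distinct p"
  then obtain t where t: "t < length p" "p!t = j" by (auto simp: in_set_conv_nth)
  then have "idx p j = t" using idx_nth[OF \<open>distinct p\<close> t(1)] by simp
  then show ?thesis using t by simp
qed

lemma telescope:
  fixes Ek rk :: "nat \<Rightarrow> real" and ek :: "nat \<times> nat \<Rightarrow> real" and X :: "nat \<times> nat \<Rightarrow> bool"
  assumes dist: "distinct p" and ne: "p \<noteq> []" and hd: "hd p = 1"
    and arcs: "\<forall>i. Suc i < length p \<longrightarrow> (p!i, p!Suc i) \<in> A"
    and An: "A \<subseteq> {1..n}\<times>{1..n}"
    and X: "{a\<in>A. X a} = path_arcs p"
    and rec: "\<forall>j\<in>{2..n}. Ek j = (\<Sum>i\<in>{i. (i,j)\<in>A}. (Ek i + rk i - ek (i,j)) * of_bool (X (i,j)))"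
  shows "t < length p \<Longrightarrow> Ek (p!t) = Ek 1 + (\<Sum>s<t. rk (p!s) - ek (p!s, p!Suc s))"
proof (induction t)
  case 0 then show ?case using hd ne by (simp add: hd_conv_nth)
next
  case (Suc t)
  let ?j = "p!Suc t"
  have arc: "(p!t, ?j) \<in> A" using arcs Suc.prems by blast
  have p0: "p!0 = 1" using hd ne by (simp add: hd_conv_nth)
  have "?j \<noteq> 1" using nth_eq_iff_index_eq[OF dist Suc.prems, of 0] p0 ne by auto
  moreover have "?j \<in> {1..n}" using arc An by auto
  ultimately have j2: "?j \<in> {2..n}" by auto
  have finA: "finite A" using An by (rule finite_subset) simp
  have fin: "finite {i. (i,?j) \<in> A}" by (rule finite_subset[of _ "{1..n}"]) (use An in blast, simp)
  have "(p!t,?j) \<in> path_arcs p" using Suc.prems by (auto simp: path_arcs_iff)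
  then have Xt: "X (p!t, ?j)" using X by blast
  have other: "\<not> X (i,?j)" if "(i,?j)\<in>A" "i \<noteq> p!t" for i
  proof
    assume "X (i,?j)"
    then have "(i,?j) \<in> path_arcs p" using X that by blast
    then obtain s where s: "Suc s < length p" "i = p!s" "?j = p!Suc s" by (auto simp: path_arcs_iff)
    then have "Suc s = Suc t" using nth_eq_iff_index_eq[OF dist Suc.prems s(1)] by auto
    then show False using s that by simp
  qed
  have "Ek ?j = (\<Sum>i\<in>{i. (i,?j)\<in>A}. (Ek i + rk i - ek (i,?j)) * of_bool (X (i,?j)))"
    using rec j2 by blast
  also have "\<dots> = (Ek (p!t) + rk (p!t) - ek (p!t,?j)) * of_bool (X (p!t,?j))"
    by (rule sum_single[OF fin]) (use arc other in auto)
  also have "\<dots> = Ek (p!t) + rk (p!t) - ek (p!t,?j)" using Xt by simp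
  finally show ?case using Suc.IH Suc.prems by simp
qed

locale msr_setting =
  fixes n N :: nat and A :: "(nat \<times> nat) set"
    and tau e :: "nat \<Rightarrow> nat \<times> nat \<Rightarrow> bool list \<Rightarrow> real"
    and E1 :: "nat \<Rightarrow> real" and g :: real
  assumes n2: "n \<ge> 2"
    and A_nodes: "A \<subseteq> {1..n} \<times> {1..n}"
    and N1: "N \<ge> 1"
    and E1_nonneg: "\<forall>k\<in>{1..N}. E1 k \<ge> 0"
    and g_pos: "g > 0"
    and e_pos: "\<forall>a\<in>A. \<forall>k\<in>{1..N}. \<forall>y. length y = N \<longrightarrow> e k a y > 0"
    and path_ex: "\<exists>p. is_dpath n A p"
    and must_recharge: "\<forall>x. routing_ok n A N x \<longrightarrow>
          (\<forall>k\<in>{1..N}. (\<Sum>a\<in>{a \<in> A. x k a}. e k a (arcvec N x a)) > E1 k)"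
begin

lemma finA: "finite A"
  using A_nodes finite_subset by blast

definition T where "T x = (\<Sum>a\<in>A. \<Sum>k=1..N. tau k a (arcvec N x a))"

lemma obj_split: "msr_obj A N tau g x r = T x + g * (\<Sum>k=1..N. \<Sum>a\<in>{a\<in>A. x k a}. r k (fst a))"
  unfolding msr_obj_def T_def by (rule split_gen[OF finA])

lemma R_split: "R_obj A N tau e g x = T x + g * (\<Sum>k=1..N. \<Sum>a\<in>{a\<in>A. x k a}. e k a (arcvec N x a))"
  unfolding R_obj_def T_def by (rule split_gen[OF finA])

lemma simple_facts:
  assumes "is_simple_path n A p"
  shows "distinct p" "p \<noteq> []" "hd p = 1" "last p = n" "\<forall>i. Suc i < length p \<longrightarrow> (p!i, p!Suc i) \<in> A"
    "p!0 = 1" "p!(length p - 1) = n" "length p \<ge> 2"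
proof -
  show d: "distinct p" "p \<noteq> []" "hd p = 1" "last p = n" "\<forall>i. Suc i < length p \<longrightarrow> (p!i, p!Suc i) \<in> A"
    using assms unfolding is_simple_path_def is_dpath_def by auto
  show "p!0 = 1" using d by (simp add: hd_conv_nth)
  show "p!(length p - 1) = n" using d by (simp add: last_conv_nth)
  show "length p \<ge> 2"
  proof (rule ccontr)
    assume "\<not> length p \<ge> 2"
    moreover have "0 < length p" using d(2) by simp
    ultimately have "length p = Suc 0" by linarith
    then obtain a where "p = [a]" by (auto simp: length_Suc_conv)
    then have "hd p = last p" by simp
    then show False using d n2 by simp
  qed
qed

lemma lower_k:
  assumes F: "msr_feasible n A N e E1 x r E" and k: "k\<in>{1..N}"
  shows "(\<Sum>a\<in>{a\<in>A. x k a}. r k (fst a)) \<ge> (\<Sum>a\<in>{a\<in>A. x k a}. e k a (arcvec N x a)) - E1 k"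
proof -
  obtain p where p: "is_simple_path n A p" "{a\<in>A. x k a} = path_arcs p"
    using F k unfolding msr_feasible_def routing_ok_def by blast
  note sf = simple_facts[OF p(1)]
  let ?m = "length p - 1"
  have rec: "\<forall>j\<in>{2..n}. E k j = (\<Sum>i\<in>{i. (i,j)\<in>A}. (E k i + r k i - e k (i,j) (arcvec N x (i,j))) * of_bool (x k (i,j)))"
    using F k unfolding msr_feasible_def by blast
  have tel: "E k (p!?m) = E k 1 + (\<Sum>s<?m. r k (p!s) - e k (p!s, p!Suc s) (arcvec N x (p!s, p!Suc s)))"
    by (rule telescope[where Ek="E k" and rk="r k" and ek="\<lambda>a. e k a (arcvec N x a)", OF sf(1,2,3,5) A_nodes p(2) rec])
      (use sf(2) in simp)
  have "\<forall>i\<in>{1..n}. E k i \<ge> 0" using F k unfolding msr_feasible_def by blast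
  then have "E k n \<ge> 0" using n2 by simp
  moreover have "E k 1 = E1 k" using F k unfolding msr_feasible_def by auto
  ultimately have "0 \<le> E1 k + (\<Sum>s<?m. r k (p!s)) - (\<Sum>s<?m. e k (p!s, p!Suc s) (arcvec N x (p!s, p!Suc s)))"
    using tel sf(7) by (simp add: sum_subtractf)
  then show ?thesis unfolding p(2) sum_path_arcs[OF sf(1)] by simp
qed

lemma lower:
  assumes F: "msr_feasible n A N e E1 x r E"
  shows "msr_obj A N tau g x r \<ge> R_obj A N tau e g x - g * (\<Sum>k=1..N. E1 k)"
proof -
  have "(\<Sum>k=1..N. \<Sum>a\<in>{a\<in>A. x k a}. e k a (arcvec N x a)) - (\<Sum>k=1..N. E1 k)
     \<le> (\<Sum>k=1..N. \<Sum>a\<in>{a\<in>A. x k a}. r k (fst a))"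
    unfolding sum_subtractf[symmetric] by (rule sum_mono) (use lower_k[OF F] in auto)
  then have "g * ((\<Sum>k=1..N. \<Sum>a\<in>{a\<in>A. x k a}. e k a (arcvec N x a)) - (\<Sum>k=1..N. E1 k))
     \<le> g * (\<Sum>k=1..N. \<Sum>a\<in>{a\<in>A. x k a}. r k (fst a))"
    using g_pos by (intro mult_left_mono) auto
  then show ?thesis unfolding obj_split R_split by (simp add: right_diff_distrib)
qed

lemma construct:
  assumes R: "routing_ok n A N x"
  shows "\<exists>r E. msr_feasible n A N e E1 x r E \<and>
           msr_obj A N tau g x r = R_obj A N tau e g x - g * (\<Sum>k=1..N. E1 k)"
proof -
  have "\<forall>k\<in>{1..N}. \<exists>p. is_simple_path n A p \<and> {a\<in>A. x k a} = path_arcs p"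
    using R unfolding routing_ok_def .
  from bchoice[OF this] obtain P where P0: "\<forall>k\<in>{1..N}. is_simple_path n A (P k) \<and> {a\<in>A. x k a} = path_arcs (P k)"
    by blast
  have P: "is_simple_path n A (P k) \<and> {a\<in>A. x k a} = path_arcs (P k)" if "k\<in>{1..N}" for k
    using P0 that by blast
  define ee where "ee k a = e k a (arcvec N x a)" for k a
  define Tot :: "nat \<Rightarrow> real" where "Tot k = (\<Sum>a\<in>{a\<in>A. x k a}. ee k a)" for k
  define ps :: "nat \<Rightarrow> nat \<Rightarrow> real" where "ps k t = (\<Sum>s<t. ee k (P k!s, P k!Suc s))" for k t
  define r :: "nat \<Rightarrow> nat \<Rightarrow> real" where "r k i = (if k\<in>{1..N} \<and> i = 1 then Tot k - E1 k else 0)" for k i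
  define E :: "nat \<Rightarrow> nat \<Rightarrow> real" where "E k j = (if j = 1 then E1 k else if k\<in>{1..N} \<and> j\<in>set (P k)
                  then Tot k - ps k (idx (P k) j) else 0)" for k j
  have Tot_gt: "Tot k > E1 k" if "k\<in>{1..N}" for k
    unfolding Tot_def ee_def by (rule must_recharge[rule_format, OF R that])
  have Tot_eq: "Tot k = ps k (length (P k) - 1)" if "k\<in>{1..N}" for k
  proof -
    have "Tot k = (\<Sum>a\<in>path_arcs (P k). ee k a)" using P[OF that] unfolding Tot_def by simp
    also have "\<dots> = ps k (length (P k) - 1)"
      unfolding ps_def by (rule sum_path_arcs[OF simple_facts(1)]) (use P[OF that] in blast)
    finally show ?thesis .
  qed
  have ee_pos: "ee k (P k!s, P k!Suc s) > 0" if "k\<in>{1..N}" "Suc s < length (P k)" for k s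
  proof -
    have "(P k!s, P k!Suc s) \<in> A" using simple_facts(5)[OF P[OF that(1), THEN conjunct1]] that(2) by blast
    moreover have "length (arcvec N x (P k!s, P k!Suc s)) = N" unfolding arcvec_def by simp
    ultimately show ?thesis unfolding ee_def using e_pos that(1) by blast
  qed
  have rec: "E k j = (\<Sum>i\<in>{i. (i,j)\<in>A}. (E k i + r k i - e k (i,j) (arcvec N x (i,j))) * of_bool (x k (i,j)))"
    if k: "k\<in>{1..N}" and j: "j\<in>{2..n}" for k j
  proof -
    define p where "p = P k"
    have Pk: "is_simple_path n A p" "{a\<in>A. x k a} = path_arcs p" using P[OF k] unfolding p_def by auto
    note sf = simple_facts[OF Pk(1)]
    have fin: "finite {i. (i,j) \<in> A}" by (rule finite_subset[of _ "{1..n}"]) (use A_nodes in blast, simp)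
    have j1: "j \<noteq> 1" using j by auto
    show ?thesis
    proof (cases "j \<in> set p")
      case jin: True
      define t where "t = idx p j"
      have t: "t < length p" "p!t = j" using idx_in[OF jin sf(1)] unfolding t_def by auto
      have "t \<noteq> 0"
      proof
        assume "t = 0" then show False using t sf(6) j1 by simp
      qed
      then obtain u where u: "t = Suc u" by (cases t) auto
      let ?i0 = "p!u"
      have arc: "(?i0, j) \<in> A" using sf(5) t u by auto
      have "(?i0, j) \<in> path_arcs p" using t u by (auto simp: path_arcs_iff)
      then have Xt: "x k (?i0, j)" using Pk(2) by blast
      have other: "\<not> x k (i,j)" if "(i,j)\<in>A" "i \<noteq> ?i0" for i
      proof
        assume "x k (i,j)"
        then have "(i,j) \<in> path_arcs p" using Pk(2) that by blast
        then obtain s where s: "Suc s < length p" "i = p!s" "j = p!Suc s" by (auto simp: path_arcs_iff)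
        then have "Suc s = t" using nth_eq_iff_index_eq[OF sf(1) s(1) t(1)] t by auto
        then show False using s that u by simp
      qed
      have "(\<Sum>i\<in>{i. (i,j)\<in>A}. (E k i + r k i - e k (i,j) (arcvec N x (i,j))) * of_bool (x k (i,j)))
          = (E k ?i0 + r k ?i0 - e k (?i0,j) (arcvec N x (?i0,j))) * of_bool (x k (?i0,j))"
        by (rule sum_single[OF fin]) (use arc other in auto)
      also have "\<dots> = E k ?i0 + r k ?i0 - ee k (?i0,j)" using Xt unfolding ee_def by simp
      also have "\<dots> = E k j"
      proof (cases "u = 0")
        case True
        then show ?thesis using sf(6) k t u jin unfolding E_def r_def ps_def p_def[symmetric] t_def[symmetric]
          using j1 by simp
      next
        case False
        have ul: "u < length p" "0 < length p" using t u by auto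
        have "?i0 \<noteq> 1" using nth_eq_iff_index_eq[OF sf(1) ul] sf(6) False by auto
        moreover have "?i0 \<in> set p" using t u by auto
        moreover have "idx p ?i0 = u" using sf(1) t u by (simp add: idx_nth)
        ultimately show ?thesis using k t u j1 jin unfolding E_def r_def ps_def p_def[symmetric] t_def[symmetric]
          by simp
      qed
      finally show ?thesis by simp
    next
      case False
      have "(\<Sum>i\<in>{i. (i,j)\<in>A}. (E k i + r k i - e k (i,j) (arcvec N x (i,j))) * of_bool (x k (i,j))) = 0"
      proof (rule sum.neutral, rule ballI)
        fix i assume i: "i \<in> {i. (i,j)\<in>A}"
        have "\<not> x k (i,j)"
        proof
          assume "x k (i,j)"
          then have "(i,j) \<in> path_arcs p" using Pk(2) i by blast
          then have "j \<in> set p" by (auto simp: path_arcs_iff)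
          then show False using False by simp
        qed
        then show "(E k i + r k i - e k (i,j) (arcvec N x (i,j))) * of_bool (x k (i,j)) = 0" by simp
      qed
      moreover have "E k j = 0" using False j1 unfolding E_def p_def by simp
      ultimately show ?thesis by simp
    qed
  qed
  have Enn: "E k i \<ge> 0" if k: "k\<in>{1..N}" for k i
  proof -
    define p where "p = P k"
    have Pk: "is_simple_path n A p" using P[OF k] unfolding p_def by auto
    note sf = simple_facts[OF Pk]
    show ?thesis
    proof (cases "i = 1")
      case True then show ?thesis using E1_nonneg k unfolding E_def by simp
    next
      case i1: False
      show ?thesis
      proof (cases "i \<in> set p")
        case True
        have t: "idx p i \<le> length p - 1" using idx_in[OF True sf(1)] by linarith
        have "ps k (idx p i) \<le> ps k (length p - 1)" unfolding ps_def p_def[symmetric]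
        proof (rule sum_mono2)
          fix b assume "b \<in> {..<length p - 1} - {..<idx p i}"
          then have "Suc b < length (P k)" unfolding p_def by auto
          then have "0 \<le> ee k (P k ! b, P k ! Suc b)" using ee_pos[OF k] less_imp_le by blast
          then show "0 \<le> ee k (p ! b, p ! Suc b)" unfolding p_def .
        qed (use t in auto)
        then show ?thesis using True i1 k Tot_eq[OF k] unfolding E_def p_def by simp
      next
        case False then show ?thesis using i1 unfolding E_def p_def by simp
      qed
    qed
  qed
  have feas: "msr_feasible n A N e E1 x r E"
    unfolding msr_feasible_def
  proof (intro conjI ballI)
    show "routing_ok n A N x" by (rule R)
  next
    fix k i assume "k \<in> {1..N}" then show "r k i \<ge> 0" using Tot_gt[of k] unfolding r_def by auto
  next
    fix k show "E k 1 = E1 k" by (simp add: E_def)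
  next
    fix k j assume "k \<in> {1..N}" "j \<in> {2..n}" then show "E k j = (\<Sum>i\<in>{i. (i,j)\<in>A}. (E k i + r k i - e k (i,j) (arcvec N x (i,j))) * of_bool (x k (i,j)))"
      by (rule rec)
  next
    fix k i assume "k \<in> {1..N}" then show "E k i \<ge> 0" by (rule Enn)
  qed
  have rsum: "(\<Sum>a\<in>{a\<in>A. x k a}. r k (fst a)) = Tot k - E1 k" if k: "k\<in>{1..N}" for k
  proof -
    define p where "p = P k"
    have Pk: "is_simple_path n A p" "{a\<in>A. x k a} = path_arcs p" using P[OF k] unfolding p_def by auto
    note sf = simple_facts[OF Pk(1)]
    have "(\<Sum>a\<in>{a\<in>A. x k a}. r k (fst a)) = (\<Sum>s<length p - 1. r k (p!s))"
      unfolding Pk(2) sum_path_arcs[OF sf(1)] by simp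
    also have "\<dots> = r k (p!0)"
    proof (rule sum_single)
      show "0 \<in> {..<length p - 1}" using sf(8) by simp
    next
      fix s assume "s \<in> {..<length p - 1}" "s \<noteq> 0"
      then have sl: "s < length p" "0 < length p" "s \<noteq> 0" by auto
      then have "p!s \<noteq> p!0" using nth_eq_iff_index_eq[OF sf(1) sl(1,2)] by auto
      then show "r k (p!s) = 0" using sf(6) unfolding r_def by simp
    qed simp
    also have "\<dots> = Tot k - E1 k" using sf(6) k unfolding r_def by simp
    finally show ?thesis .
  qed
  have "msr_obj A N tau g x r = T x + g * (\<Sum>k=1..N. Tot k - E1 k)"
    unfolding obj_split using rsum by simp
  also have "\<dots> = R_obj A N tau e g x - g * (\<Sum>k=1..N. E1 k)"
    unfolding R_split Tot_def ee_def by (simp add: sum_subtractf right_diff_distrib)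
  finally show ?thesis using feas by blast
qed

lemma main:
  "(\<exists>x r E. msr_optimal n A N tau e E1 g x r E) \<and>
         msr_optval n A N tau e E1 g = R_optval n A N tau e g - g * (\<Sum>k=1..N. E1 k) \<and>
         (\<forall>x r E. msr_optimal n A N tau e E1 g x r E \<longrightarrow>
            R_optimal n A N tau e g x \<and>
            msr_obj A N tau g x r = R_optval n A N tau e g - g * (\<Sum>k=1..N. E1 k))"
proof -
  obtain p0 where p0: "is_simple_path n A p0" using path_ex dpath_simple by blast
  define x0 :: "nat \<Rightarrow> nat \<times> nat \<Rightarrow> bool" where "x0 k a = (a \<in> path_arcs p0)" for k a
  have "path_arcs p0 \<subseteq> A" using simple_facts(5)[OF p0] by (auto simp: path_arcs_iff)
  then have x0: "routing_ok n A N x0" unfolding routing_ok_def x0_def using p0 by blast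
  define V where "V = {R_obj A N tau e g x | x. routing_ok n A N x}"
  define restr :: "(nat \<Rightarrow> nat \<times> nat \<Rightarrow> bool) \<Rightarrow> nat \<Rightarrow> nat \<times> nat \<Rightarrow> bool"
    where "restr x = (\<lambda>k a. k\<in>{1..N} \<and> a\<in>A \<and> x k a)" for x
  have Rr: "R_obj A N tau e g (restr x) = R_obj A N tau e g x" for x
  proof -
    have av: "arcvec N (restr x) a = arcvec N x a" if "a \<in> A" for a
      unfolding arcvec_def restr_def using that by (intro map_cong refl) auto
    have rx: "restr x k a = x k a" if "a \<in> A" "k \<in> {1..N}" for k a
      unfolding restr_def using that by simp
    show ?thesis unfolding R_obj_def
      by (intro sum.cong refl) (simp add: av rx)
  qed
  have "V \<subseteq> (R_obj A N tau e g) ` ((\<lambda>S k a. (k,a)\<in>S) ` Pow ({1..N}\<times>A))"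
  proof
    fix v assume "v \<in> V"
    then obtain x where v: "v = R_obj A N tau e g x" unfolding V_def by blast
    define S where "S = {(k,a). k\<in>{1..N} \<and> a\<in>A \<and> x k a}"
    have "restr x = (\<lambda>k a. (k,a)\<in>S)" unfolding restr_def S_def by auto
    moreover have "S \<in> Pow ({1..N}\<times>A)" unfolding S_def by auto
    ultimately show "v \<in> (R_obj A N tau e g) ` ((\<lambda>S k a. (k,a)\<in>S) ` Pow ({1..N}\<times>A))"
      using v Rr[of x] by (metis image_eqI)
  qed
  moreover have "finite ((R_obj A N tau e g) ` ((\<lambda>S k a. (k,a)\<in>S) ` Pow ({1..N}\<times>A)))"
    using finA by simp
  ultimately have finV: "finite V" by (rule finite_subset)
  have neV: "V \<noteq> {}" using x0 unfolding V_def by blast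
  have "Min V \<in> V" using finV neV by (rule Min_in)
  then obtain xR where xR: "routing_ok n A N xR" "R_obj A N tau e g xR = Min V" unfolding V_def by auto
  have Rmin: "R_obj A N tau e g xR \<le> R_obj A N tau e g x'" if "routing_ok n A N x'" for x'
    unfolding xR(2) using finV that unfolding V_def by (intro Min_le) auto
  have Rval: "R_optval n A N tau e g = R_obj A N tau e g xR"
    unfolding R_optval_def V_def[symmetric] xR(2) using finV neV by (rule cInf_eq_Min)
  define c where "c = R_obj A N tau e g xR - g * (\<Sum>k=1..N. E1 k)"
  obtain rR ER where RE: "msr_feasible n A N e E1 xR rR ER" "msr_obj A N tau g xR rR = c"
    using construct[OF xR(1)] unfolding c_def by blast
  have lowc: "c \<le> msr_obj A N tau g x' r'" if "msr_feasible n A N e E1 x' r' E'" for x' r' E'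
  proof -
    have "routing_ok n A N x'" using that unfolding msr_feasible_def by blast
    then have "c \<le> R_obj A N tau e g x' - g * (\<Sum>k=1..N. E1 k)" unfolding c_def using Rmin by simp
    also have "\<dots> \<le> msr_obj A N tau g x' r'" by (rule lower[OF that])
    finally show ?thesis .
  qed
  have opt: "msr_optimal n A N tau e E1 g xR rR ER"
    unfolding msr_optimal_def using RE lowc by auto
  have mval: "msr_optval n A N tau e E1 g = c"
    unfolding msr_optval_def
  proof (rule cInf_eq_minimum)
    show "c \<in> {msr_obj A N tau g x r |x r E. msr_feasible n A N e E1 x r E}" using RE by auto
  next
    fix v assume "v \<in> {msr_obj A N tau g x r |x r E. msr_feasible n A N e E1 x r E}"
    then show "c \<le> v" using lowc by auto
  qed
  have third: "R_optimal n A N tau e g x \<and> msr_obj A N tau g x r = c"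
    if o: "msr_optimal n A N tau e E1 g x r E" for x r E
  proof -
    have F: "msr_feasible n A N e E1 x r E" using o unfolding msr_optimal_def by blast
    have le: "msr_obj A N tau g x r \<le> msr_obj A N tau g x' r'" if "msr_feasible n A N e E1 x' r' E'" for x' r' E'
      using o that unfolding msr_optimal_def by blast
    have ox: "routing_ok n A N x" using F unfolding msr_feasible_def by blast
    have eqc: "msr_obj A N tau g x r = c" using le[OF RE(1)] RE(2) lowc[OF F] by simp
    have "R_obj A N tau e g x \<le> R_obj A N tau e g x'" if x': "routing_ok n A N x'" for x'
    proof -
      obtain r' E' where "msr_feasible n A N e E1 x' r' E'"
          "msr_obj A N tau g x' r' = R_obj A N tau e g x' - g * (\<Sum>k=1..N. E1 k)"
        using construct[OF x'] by blast
      then have "msr_obj A N tau g x r \<le> R_obj A N tau e g x' - g * (\<Sum>k=1..N. E1 k)" using le by metis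
      moreover have "R_obj A N tau e g x - g * (\<Sum>k=1..N. E1 k) \<le> msr_obj A N tau g x r" by (rule lower[OF F])
      ultimately show ?thesis by simp
    qed
    then show ?thesis using ox eqc unfolding R_optimal_def by blast
  qed
  show ?thesis using opt mval third unfolding Rval c_def by blast
qed

end

theorem mainTheorem6:
  fixes n N :: nat and A :: "(nat \<times> nat) set"
    and tau e :: "nat \<Rightarrow> nat \<times> nat \<Rightarrow> bool list \<Rightarrow> real"
    and E1 :: "nat \<Rightarrow> real" and g :: real
  assumes n2: "n \<ge> 2"
    and A_nodes: "A \<subseteq> {1..n} \<times> {1..n}"
    and I1: "\<forall>j. (j, 1) \<notin> A"
    and On: "\<forall>j. (n, j) \<notin> A"
    and N1: "N \<ge> 1"
    and E1_nonneg: "\<forall>k\<in>{1..N}. E1 k \<ge> 0"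
    and g_pos: "g > 0"
    and e_pos: "\<forall>a\<in>A. \<forall>k\<in>{1..N}. \<forall>y. length y = N \<longrightarrow> e k a y > 0"
    and path_ex: "\<exists>p. is_dpath n A p"
    and must_recharge: "\<forall>x. routing_ok n A N x \<longrightarrow>
          (\<forall>k\<in>{1..N}. (\<Sum>a\<in>{a \<in> A. x k a}. e k a (arcvec N x a)) > E1 k)"
  shows "(\<exists>x r E. msr_optimal n A N tau e E1 g x r E) \<and>
         msr_optval n A N tau e E1 g = R_optval n A N tau e g - g * (\<Sum>k=1..N. E1 k) \<and>
         (\<forall>x r E. msr_optimal n A N tau e E1 g x r E \<longrightarrow>
            R_optimal n A N tau e g x \<and>
            msr_obj A N tau g x r = R_optval n A N tau e g - g * (\<Sum>k=1..N. E1 k))"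
proof -
  interpret msr_setting n N A tau e E1 g
    using n2 A_nodes N1 E1_nonneg g_pos e_pos path_ex must_recharge by unfold_locales
  show ?thesis by (rule main)
qed

end
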